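(* Let $I=\prod_{i=1}^d[a_i,b_i]$ with $a_i<b_i$, and let $f\in C(I)$ satisfy $f(\mathbf x)=0$ for all $\mathbf x\in\partial I$ and $f(\mathbf x_0)>0$ for some $\mathbf x_0$ in the interior $I^0$. Then there exists a function $$Q(\mathbf x)=A\sum_{i=1}^d(x_i-a_i)^2+C$$ with constants $A<0$ and $C\in\mathbb R$ such that $Q(\mathbf x)>0$ and $Q(\mathbf x)\ge f(\mathbf x)$ for all $\mathbf x\in I$, and there exists $\mathbf y\in I^0$ with $Q(\mathbf y)=f(\mathbf y)$. *)

theory Defs
  imports "HOL-Analysis.Analysis"
begin

end

theory Submission
  imports Defs
begin

theorem theorem5p1:
  fixes a b :: "real ^ 'n" and f :: "real ^ 'n \<Rightarrow> real" and x0 :: "real ^ 'n"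
  assumes ab: "\<forall>i. a $ i < b $ i"
    and cont: "continuous_on (cbox a b) f"
    and bd: "\<forall>x \<in> frontier (cbox a b). f x = 0"
    and x0: "x0 \<in> interior (cbox a b)" "f x0 > 0"
  shows "\<exists>A C :: real. A < 0 \<and>
           (\<forall>x \<in> cbox a b. A * (\<Sum>i\<in>UNIV. (x $ i - a $ i)^2) + C > 0
                          \<and> A * (\<Sum>i\<in>UNIV. (x $ i - a $ i)^2) + C \<ge> f x) \<and>
           (\<exists>y \<in> interior (cbox a b). A * (\<Sum>i\<in>UNIV. (y $ i - a $ i)^2) + C = f y)"
proof -
  define q where "q = (\<lambda>x::real^'n. \<Sum>i\<in>UNIV. (x $ i - a $ i)^2)"
  define B where "B = q b + 1"
  have qnn: "q x \<ge> 0" for x unfolding q_def by (simp add: sum_nonneg)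
  have qle: "q x \<le> q b" if "x \<in> cbox a b" for x
    unfolding q_def
  proof (rule sum_mono)
    fix i
    have "a $ i \<le> x $ i" "x $ i \<le> b $ i" using that by (auto simp: mem_box_cart)
    then show "(x $ i - a $ i)^2 \<le> (b $ i - a $ i)^2"
      by (intro power_mono) auto
  qed
  have Bpos: "B > 0" using qnn[of b] by (simp add: B_def)
  define A where "A = - f x0 / (2 * B)"
  have Aneg: "A < 0" using Bpos x0(2) by (simp add: A_def)
  have Aq: "- A * q b < f x0"
  proof -
    have "- A * q b = f x0 * (q b / (2 * B))" by (simp add: A_def)
    also have "\<dots> < f x0 * 1"
      using x0(2) Bpos by (intro mult_strict_left_mono) (auto simp: B_def)
    finally show ?thesis by simp
  qed
  define g where "g = (\<lambda>x. f x - A * q x)"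
  have gc: "continuous_on (cbox a b) g"
    unfolding g_def q_def by (intro continuous_intros cont)
  have x0c: "x0 \<in> cbox a b" using x0(1) interior_subset by blast
  obtain y where y: "y \<in> cbox a b" "\<forall>z\<in>cbox a b. g z \<le> g y"
    using continuous_attains_sup[OF compact_cbox _ gc] x0c by blast
  have gx0: "g x0 \<ge> f x0" using Aneg qnn[of x0] by (simp add: g_def mult_nonpos_nonneg)
  have yint: "y \<in> interior (cbox a b)"
  proof (rule ccontr)
    assume "y \<notin> interior (cbox a b)"
    then have "y \<in> frontier (cbox a b)" using y(1) by (simp add: frontier_def)
    then have "g y = - A * q y" using bd by (simp add: g_def)
    also have "\<dots> \<le> - A * q b" using qle[OF y(1)] Aneg by (intro mult_left_mono) auto
    finally have "g y < f x0" using Aq by simp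
    with gx0 y(2) x0c show False by force
  qed
  show ?thesis
  proof (intro exI conjI ballI bexI)
    show "A < 0" by fact
    show "y \<in> interior (cbox a b)" by fact
    show "A * (\<Sum>i\<in>UNIV. (y $ i - a $ i)^2) + g y = f y" by (simp add: g_def q_def)
  next
    fix x assume x: "x \<in> cbox a b"
    show "A * (\<Sum>i\<in>UNIV. (x $ i - a $ i)^2) + g y \<ge> f x"
      using y(2) x by (force simp: g_def q_def)
    have "- A * q x \<le> - A * q b" using qle[OF x] Aneg by (intro mult_left_mono) auto
    moreover have "g y \<ge> f x0" using gx0 y(2) x0c by force
    ultimately show "A * (\<Sum>i\<in>UNIV. (x $ i - a $ i)^2) + g y > 0"
      using Aq by (simp add: q_def)
  qed
qed

end
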